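(* Let $h>0$, $\delta_1>0$, $\theta_1\in(0,\pi)$, $\lambda_1=\delta_1e^{\mathrm{i}\theta_1/2}$, with $\lambda_1\pm\frac{2\mathrm{i}}{h\lambda_1}\neq0$, and let $\alpha_1,\beta_1\in\mathbb{C}\setminus\{0\}$. Define $$E_n(t)=\left(\frac{2-\mathrm{i}h\delta_1^2e^{\mathrm{i}\theta_1}}{2+\mathrm{i}h\delta_1^2e^{\mathrm{i}\theta_1}}\right)^{n}\exp\!\left(\frac{\mathrm{i}}{2}\Big(\delta_1^2+\frac{1}{\delta_1^2}\Big)\cos\theta_1\, t-\frac12\Big(\delta_1^2-\frac{1}{\delta_1^2}\Big)\sin\theta_1\, t\right)$$ and $$U_n=-\frac{4\mathrm{i}\delta_1\alpha_1\bar\beta_1\sin\theta_1e^{\mathrm{i}\theta_1/2}}{|\beta_1|^2(2+\mathrm{i}h\delta_1^2e^{\mathrm{i}\theta_1})E_n^{-1}+|\alpha_1|^2(2e^{\mathrm{i}\theta_1}+\mathrm{i}h\delta_1^2)\bar E_n},$$ $$R_n=-\frac{2\mathrm{i}\delta_1\alpha_1\bar\beta_1\sin\theta_1e^{\mathrm{i}\theta_1/2}}{|\beta_1|^2E_n^{-1}+|\alpha_1|^2\bar E_ne^{\mathrm{i}\theta_1}},\qquad Q_n=-\frac{2\mathrm{i}\alpha_1\bar\beta_1\sin\theta_1e^{\mathrm{i}\theta_1/2}}{\delta_1\big(|\beta_1|^2E_n^{-1}e^{\mathrm{i}\theta_1}+|\alpha_1|^2\bar E_n\big)}.$$ Then $(U_n,R_n,Q_n)$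 is a solution of the semi-discrete MTM system (at all $(n,t)$ where the denominators are nonzero).
   Context: Fix $h>0$. The semi-discrete MTM system for complex-valued differentiable functions $U_n(t),R_n(t),Q_n(t)$, $n\in\mathbb{Z}$, is $$4\mathrm{i}\frac{dU_n}{dt}+Q_{n+1}+Q_n+\frac{2\mathrm{i}}{h}(R_{n+1}-R_n)+U_n^2(\bar R_n+\bar R_{n+1})-U_n(|Q_{n+1}|^2+|Q_n|^2+|R_{n+1}|^2+|R_n|^2)-\frac{\mathrm{i}h}{2}U_n^2(\bar Q_{n+1}-\bar Q_n)=0,$$ $$-\frac{2\mathrm{i}}{h}(Q_{n+1}-Q_n)+2U_n-|U_n|^2(Q_{n+1}+Q_n)=0,\qquad R_{n+1}+R_n-2U_n+\frac{\mathrm{i}h}{2}|U_n|^2(R_{n+1}-R_n)=0.$$ *)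

theory Defs
  imports Complex_Main
begin

text \<open>Parameters: h, d = delta_1, th = theta_1, a = alpha_1, b = beta_1.
  Lattice index n :: int, time t :: real.\<close>

definition mtmE :: "real \<Rightarrow> real \<Rightarrow> real \<Rightarrow> int \<Rightarrow> real \<Rightarrow> complex" where
  "mtmE h d th n t =
     ((2 - \<i> * of_real h * of_real (d^2) * exp (\<i> * of_real th)) /
      (2 + \<i> * of_real h * of_real (d^2) * exp (\<i> * of_real th))) powi n *
     exp (\<i> / 2 * of_real ((d^2 + 1 / d^2) * cos th * t)
          - of_real (1/2 * (d^2 - 1 / d^2) * sin th * t))"

definition mtmU_den :: "real \<Rightarrow> real \<Rightarrow> real \<Rightarrow> complex \<Rightarrow> complex \<Rightarrow> int \<Rightarrow> real \<Rightarrow> complex" where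
  "mtmU_den h d th a b n t =
     of_real ((cmod b)^2) * (2 + \<i> * of_real h * of_real (d^2) * exp (\<i> * of_real th)) * inverse (mtmE h d th n t)
     + of_real ((cmod a)^2) * (2 * exp (\<i> * of_real th) + \<i> * of_real h * of_real (d^2)) * cnj (mtmE h d th n t)"

definition mtmU :: "real \<Rightarrow> real \<Rightarrow> real \<Rightarrow> complex \<Rightarrow> complex \<Rightarrow> int \<Rightarrow> real \<Rightarrow> complex" where
  "mtmU h d th a b n t =
     - (4 * \<i> * of_real d * a * cnj b * of_real (sin th) * exp (\<i> * of_real th / 2))
       / mtmU_den h d th a b n t"

definition mtmR_den :: "real \<Rightarrow> real \<Rightarrow> real \<Rightarrow> complex \<Rightarrow> complex \<Rightarrow> int \<Rightarrow> real \<Rightarrow> complex" where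
  "mtmR_den h d th a b n t =
     of_real ((cmod b)^2) * inverse (mtmE h d th n t)
     + of_real ((cmod a)^2) * cnj (mtmE h d th n t) * exp (\<i> * of_real th)"

definition mtmR :: "real \<Rightarrow> real \<Rightarrow> real \<Rightarrow> complex \<Rightarrow> complex \<Rightarrow> int \<Rightarrow> real \<Rightarrow> complex" where
  "mtmR h d th a b n t =
     - (2 * \<i> * of_real d * a * cnj b * of_real (sin th) * exp (\<i> * of_real th / 2))
       / mtmR_den h d th a b n t"

definition mtmQ_den :: "real \<Rightarrow> real \<Rightarrow> real \<Rightarrow> complex \<Rightarrow> complex \<Rightarrow> int \<Rightarrow> real \<Rightarrow> complex" where
  "mtmQ_den h d th a b n t =
     of_real d * (of_real ((cmod b)^2) * inverse (mtmE h d th n t) * exp (\<i> * of_real th)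
     + of_real ((cmod a)^2) * cnj (mtmE h d th n t))"

definition mtmQ :: "real \<Rightarrow> real \<Rightarrow> real \<Rightarrow> complex \<Rightarrow> complex \<Rightarrow> int \<Rightarrow> real \<Rightarrow> complex" where
  "mtmQ h d th a b n t =
     - (2 * \<i> * a * cnj b * of_real (sin th) * exp (\<i> * of_real th / 2))
       / mtmQ_den h d th a b n t"

definition semidiscrete_MTM_at ::
  "real \<Rightarrow> (int \<Rightarrow> real \<Rightarrow> complex) \<Rightarrow> (int \<Rightarrow> real \<Rightarrow> complex) \<Rightarrow> (int \<Rightarrow> real \<Rightarrow> complex)
   \<Rightarrow> int \<Rightarrow> real \<Rightarrow> bool" where
  "semidiscrete_MTM_at h U R Q n t \<longleftrightarrow>
     (\<exists>D. ((\<lambda>s. U n s) has_vector_derivative D) (at t) \<and>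
        4 * \<i> * D + Q (n+1) t + Q n t + 2 * \<i> / of_real h * (R (n+1) t - R n t)
        + (U n t)^2 * (cnj (R n t) + cnj (R (n+1) t))
        - U n t * of_real ((cmod (Q (n+1) t))^2 + (cmod (Q n t))^2 + (cmod (R (n+1) t))^2 + (cmod (R n t))^2)
        - \<i> * of_real h / 2 * (U n t)^2 * (cnj (Q (n+1) t) - cnj (Q n t)) = 0) \<and>
     - 2 * \<i> / of_real h * (Q (n+1) t - Q n t) + 2 * U n t
        - of_real ((cmod (U n t))^2) * (Q (n+1) t + Q n t) = 0 \<and>
     R (n+1) t + R n t - 2 * U n t
        + \<i> * of_real h / 2 * of_real ((cmod (U n t))^2) * (R (n+1) t - R n t) = 0"

end

theory Submission
  imports Defs "HOL-Analysis.Complex_Transcendental"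
begin


lemma gen1:
  fixes P G z e dl :: complex
  defines "a1 \<equiv> 1 + e*z" and "a2 \<equiv> z + e" and "b1 \<equiv> 1 - e*z" and "b2 \<equiv> z - e"
  defines "V \<equiv> P*a1 + G*a2" and "L \<equiv> P + z*G" and "M \<equiv> z*P + G"
  defines "L1 \<equiv> P*a1*b2 + z*G*a2*b1" and "M1 \<equiv> z*P*a1*b2 + G*a2*b1"
  defines "S \<equiv> - ((z*z-1)*(z*z-1)) / z"
  defines "Vd \<equiv> -2*(dl*z + 1/(dl*z))*P*a1 - 2*(dl/z+z/dl)*G*a2"
  assumes nz: "V \<noteq> 0" "L \<noteq> 0" "M \<noteq> 0" "L1 \<noteq> 0" "M1 \<noteq> 0" "b1 \<noteq> 0" "b2 \<noteq> 0" "e \<noteq> 0" "dl \<noteq> 0" "z \<noteq> 0"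
  shows "dl*Vd/(V*V) + b1*b2/M1 + 1/M - (dl*dl/e)*(b1*b2/L1 - 1/L)
     + (dl*dl*S/(V*V))*(G*P/M + G*P*a1*a2/M1)
     - (S*(1+dl*dl)/V)*(G*P/(L*M) + G*P*a1*a2*b1*b2/(L1*M1))
     - (e*S/(V*V))*(G*P*a1*a2/L1 - G*P/L) = 0"
proof -
  define X where "X = V*V*L*M*L1*M1*e*dl*z"
  have t1: "dl*Vd/(V*V) * X = (dl*z*Vd)*L*M*L1*M1*e*dl" using nz unfolding X_def by (simp add: field_simps)
  have t2: "(b1*b2/M1 + 1/M) * X = V*V*z*e*dl*(b1*b2*L*M*L1 + L*L1*M1)" using nz unfolding X_def by (simp add: field_simps)
  have t3: "(dl*dl/e)*(b1*b2/L1 - 1/L) * X = dl*dl*dl*z*V*V*M*M1*(b1*b2*L - L1)" using nz unfolding X_def by (simp add: field_simps)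
  have t4: "(dl*dl*S/(V*V))*(G*P/M + G*P*a1*a2/M1) * X = dl*dl*(z*S)*e*dl*(G*P*L*L1*M1 + G*P*a1*a2*L*M*L1)" using nz unfolding X_def by (simp add: field_simps)
  have t5: "(S*(1+dl*dl)/V)*(G*P/(L*M) + G*P*a1*a2*b1*b2/(L1*M1)) * X = (z*S)*(1+dl*dl)*V*e*dl*(G*P*L1*M1 + G*P*a1*a2*b1*b2*L*M)" using nz unfolding X_def by (simp add: field_simps)
  have t6: "(e*S/(V*V))*(G*P*a1*a2/L1 - G*P/L) * X = e*(z*S)*e*dl*M*M1*(G*P*a1*a2*L - G*P*L1)" using nz unfolding X_def by (simp add: field_simps)
  have zS: "z*S = - ((z*z-1)*(z*z-1))" using nz unfolding S_def by simp
  have zV: "dl*z*Vd = -2*(dl*dl*z*z+1)*P*a1 - 2*(dl*dl+z*z)*G*a2" using nz unfolding Vd_def by (simp add: field_simps)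
  have lin: "\<And>a b c d f g k X :: complex. (a + b + c - d + f - g - k)*X = a*X + (b*X + c*X) - d*X + f*X - g*X - k*X"
    by (simp add: algebra_simps)
  have t2': "b1*b2/M1*X + 1/M*X = V*V*z*e*dl*(b1*b2*L*M*L1 + L*L1*M1)" using t2 by (simp add: distrib_right)
  have "(dl*Vd/(V*V) + b1*b2/M1 + 1/M - (dl*dl/e)*(b1*b2/L1 - 1/L)
     + (dl*dl*S/(V*V))*(G*P/M + G*P*a1*a2/M1)
     - (S*(1+dl*dl)/V)*(G*P/(L*M) + G*P*a1*a2*b1*b2/(L1*M1))
     - (e*S/(V*V))*(G*P*a1*a2/L1 - G*P/L)) * X
     = (dl*z*Vd)*L*M*L1*M1*e*dl + V*V*z*e*dl*(b1*b2*L*M*L1 + L*L1*M1)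
      - dl*dl*dl*z*V*V*M*M1*(b1*b2*L - L1)
      + dl*dl*(z*S)*e*dl*(G*P*L*L1*M1 + G*P*a1*a2*L*M*L1)
      - (z*S)*(1+dl*dl)*V*e*dl*(G*P*L1*M1 + G*P*a1*a2*b1*b2*L*M)
      - e*(z*S)*e*dl*M*M1*(G*P*a1*a2*L - G*P*L1)"
    unfolding lin t1 t2' t3 t4 t5 t6 ..
  also have "\<dots> = 0"
    unfolding zS zV unfolding V_def L_def M_def L1_def M1_def a1_def a2_def b1_def b2_def
    by algebra
  finally show ?thesis using nz unfolding X_def by simp
qed
lemma gen3:
  fixes P G z e :: complex
  defines "a1 \<equiv> 1 + e*z" and "a2 \<equiv> z + e" and "b1 \<equiv> 1 - e*z" and "b2 \<equiv> z - e"
  defines "V \<equiv> P*a1 + G*a2" and "W \<equiv> P*b2 + G*b1" and "L \<equiv> P + z*G"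
  defines "L1 \<equiv> P*a1*b2 + z*G*a2*b1"
  defines "S \<equiv> - ((z*z-1)*(z*z-1)) / z"
  assumes nz: "V \<noteq> 0" "W \<noteq> 0" "L \<noteq> 0" "L1 \<noteq> 0" "z \<noteq> 0"
  shows "b1*b2/L1 + 1/L - 2/V + (e*S*G*P/(V*W))*(b1*b2/L1 - 1/L) = 0"
proof -
  define X where "X = V*W*L*L1*z"
  have t1: "b1*b2/L1*X = b1*b2*V*W*L*z" using nz unfolding X_def by (simp add: field_simps)
  have t2: "1/L*X = V*W*L1*z" using nz unfolding X_def by (simp add: field_simps)
  have t3: "2/V*X = 2*W*L*L1*z" using nz unfolding X_def by (simp add: field_simps)
  have t4: "(e*S*G*P/(V*W))*(b1*b2/L1 - 1/L)*X = e*(z*S)*G*P*(b1*b2*L - L1)" using nz unfolding X_def by (simp add: field_simps)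
  have zS: "z*S = - ((z*z-1)*(z*z-1))" using nz unfolding S_def by simp
  have lin: "\<And>a b c d X :: complex. (a + b - c + d)*X = a*X + b*X - c*X + d*X"
    by (simp add: algebra_simps)
  have "(b1*b2/L1 + 1/L - 2/V + (e*S*G*P/(V*W))*(b1*b2/L1 - 1/L)) * X
     = b1*b2*V*W*L*z + V*W*L1*z - 2*W*L*L1*z + e*(z*S)*G*P*(b1*b2*L - L1)"
    unfolding lin t1 t2 t3 t4 ..
  also have "\<dots> = 0"
    unfolding zS unfolding V_def W_def L_def L1_def a1_def a2_def b1_def b2_def
    by algebra
  finally show ?thesis using nz unfolding X_def by simp
qed

lemma gen2:
  fixes P G z e :: complex
  defines "a1 \<equiv> 1 + e*z" and "a2 \<equiv> z + e" and "b1 \<equiv> 1 - e*z" and "b2 \<equiv> z - e"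
  defines "V \<equiv> P*a1 + G*a2" and "W \<equiv> P*b2 + G*b1" and "M \<equiv> z*P + G"
  defines "M1 \<equiv> z*P*a1*b2 + G*a2*b1"
  defines "S \<equiv> - ((z*z-1)*(z*z-1)) / z"
  assumes nz: "V \<noteq> 0" "W \<noteq> 0" "M \<noteq> 0" "M1 \<noteq> 0" "z \<noteq> 0" "e \<noteq> 0"
  shows "(1/e)*(b1*b2/M1 - 1/M) + 2/V - S*G*P*(b1*b2/M1 + 1/M)/(V*W) = 0"
proof -
  define X where "X = e*V*W*M*M1*z"
  have t1: "(1/e)*(b1*b2/M1 - 1/M)*X = V*W*z*(b1*b2*M - M1)" using nz unfolding X_def by (simp add: field_simps)
  have t2: "2/V*X = 2*e*W*M*M1*z" using nz unfolding X_def by (simp add: field_simps)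
  have t3: "S*G*P*(b1*b2/M1 + 1/M)/(V*W)*X = e*(z*S)*G*P*(b1*b2*M + M1)" using nz unfolding X_def by (simp add: field_simps)
  have zS: "z*S = - ((z*z-1)*(z*z-1))" using nz unfolding S_def by simp
  have lin: "\<And>a b c X :: complex. (a + b - c)*X = a*X + b*X - c*X"
    by (simp add: algebra_simps)
  have "((1/e)*(b1*b2/M1 - 1/M) + 2/V - S*G*P*(b1*b2/M1 + 1/M)/(V*W)) * X
     = V*W*z*(b1*b2*M - M1) + 2*e*W*M*M1*z - e*(z*S)*G*P*(b1*b2*M + M1)"
    unfolding lin t1 t2 t3 ..
  also have "\<dots> = 0"
    unfolding zS unfolding V_def W_def M_def M1_def a1_def a2_def b1_def b2_def
    by algebra
  finally show ?thesis using nz unfolding X_def by simp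
qed
lemma gen1a:
  fixes P G z e dl Z Y Ja Jb Ka Kb Fa Fb Ha Hb Ia Ib :: complex
  defines "a1 \<equiv> 1 + e*z" and "a2 \<equiv> z + e" and "b1 \<equiv> 1 - e*z" and "b2 \<equiv> z - e"
  defines "V \<equiv> P*a1 + G*a2" and "L \<equiv> P + z*G" and "M \<equiv> z*P + G"
  defines "L1 \<equiv> P*a1*b2 + z*G*a2*b1" and "M1 \<equiv> z*P*a1*b2 + G*a2*b1"
  defines "S \<equiv> - ((z*z-1)*(z*z-1)) / z"
  defines "Vd \<equiv> -2*(dl*z + 1/(dl*z))*P*a1 - 2*(dl/z+z/dl)*G*a2"
  assumes nz: "V \<noteq> 0" "L \<noteq> 0" "M \<noteq> 0" "L1 \<noteq> 0" "M1 \<noteq> 0" "b1 \<noteq> 0" "b2 \<noteq> 0" "e \<noteq> 0" "dl \<noteq> 0" "z \<noteq> 0"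
  assumes at: "Z = Vd/(V*V)" "Y = 1/V" "Ja = b1*b2/M1" "Jb = 1/M" "Ka = b1*b2/L1" "Kb = 1/L"
    "Fa = G*P/M" "Fb = G*P*a1*a2/M1" "Ha = Kb*Fa" "Hb = Ka*Fb" "Ia = G*P*a1*a2/L1" "Ib = G*P/L"
  shows "dl*Z + Ja + Jb - (dl*dl/e)*(Ka - Kb) + dl*dl*S*(Y*Y)*(Fa+Fb) - S*(1+dl*dl)*Y*(Ha+Hb) - e*S*(Y*Y)*(Ia - Ib) = 0"
proof -
  have g: "dl*Vd/(V*V) + b1*b2/M1 + 1/M - (dl*dl/e)*(b1*b2/L1 - 1/L)
     + (dl*dl*S/(V*V))*(G*P/M + G*P*a1*a2/M1)
     - (S*(1+dl*dl)/V)*(G*P/(L*M) + G*P*a1*a2*b1*b2/(L1*M1))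
     - (e*S/(V*V))*(G*P*a1*a2/L1 - G*P/L) = 0"
    using gen1[where P=P and G=G and z=z and e=e and dl=dl] nz
    unfolding a1_def a2_def b1_def b2_def V_def L_def M_def L1_def M1_def S_def Vd_def by simp
  have e1: "dl*Z = dl*Vd/(V*V)" using at by simp
  have e2: "dl*dl*S*(Y*Y)*(Fa+Fb) = (dl*dl*S/(V*V))*(G*P/M + G*P*a1*a2/M1)" using at by simp
  have e3: "S*(1+dl*dl)*Y*(Ha+Hb) = (S*(1+dl*dl)/V)*(G*P/(L*M) + G*P*a1*a2*b1*b2/(L1*M1))"
    unfolding at(9,10) unfolding at(2,5,6,7,8) using nz by (simp add: field_simps)
  have e4: "e*S*(Y*Y)*(Ia - Ib) = (e*S/(V*V))*(G*P*a1*a2/L1 - G*P/L)" using at by simp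
  show ?thesis unfolding e1 e2 e3 e4 using g at by simp
qed


lemma fracR1:
  fixes dd m S z N G P a1 a2 b1 b2 M1 :: complex
  assumes "M1 \<noteq> 0" "b1 \<noteq> 0" "b2 \<noteq> 0" "N \<noteq> 0" "m \<noteq> 0" "z \<noteq> 0"
  shows "dd * (m*S/(z*N)) * z * (G*a2/b2) * (P*a1/b1) / (m * (M1/(b1*b2))) = dd*S*(G*P*a1*a2/M1)/N"
  using assms by (simp add: field_simps)

lemma fracQ1:
  fixes dd m S z N G P a1 a2 b1 b2 L1 :: complex
  assumes "L1 \<noteq> 0" "b1 \<noteq> 0" "b2 \<noteq> 0" "N \<noteq> 0" "m \<noteq> 0" "z \<noteq> 0" "dd \<noteq> 0"
  shows "(m*S/(z*N)) * z * (G*a2/b2) * (P*a1/b1) / (dd * m * (L1/(b1*b2))) = S*(G*P*a1*a2/L1)/(dd*N)"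
  using assms by (simp add: field_simps)

theorem mainTheorem6:
  fixes h d th :: real and a b :: complex and n :: int and t :: real
  assumes "h > 0" and "d > 0" and "0 < th" and "th < pi"
    and "\<And>l. l = of_real d * exp (\<i> * of_real th / 2) \<Longrightarrow>
           l + 2 * \<i> / (of_real h * l) \<noteq> 0 \<and> l - 2 * \<i> / (of_real h * l) \<noteq> 0"
    and "a \<noteq> 0" and "b \<noteq> 0"
    and "mtmU_den h d th a b n t \<noteq> 0"
    and "mtmR_den h d th a b n t \<noteq> 0" and "mtmR_den h d th a b (n+1) t \<noteq> 0"
    and "mtmQ_den h d th a b n t \<noteq> 0" and "mtmQ_den h d th a b (n+1) t \<noteq> 0"
  shows "semidiscrete_MTM_at h (mtmU h d th a b) (mtmR h d th a b) (mtmQ h d th a b) n t"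
proof -
  note hpos = assms(1) and dpos = assms(2)
  define w where "w = exp (\<i> * of_real th / 2)"
  define z where "z = exp (\<i> * of_real th)"
  define dl :: complex where "dl = of_real d * of_real d"
  define e where "e = \<i> * of_real h * dl / 2"
  define A :: complex where "A = of_real ((cmod a)^2)"
  define B :: complex where "B = of_real ((cmod b)^2)"
  define m where "m = A * B"
  have w0: "w \<noteq> 0" unfolding w_def by simp
  have zw: "z = w * w" unfolding z_def w_def by (simp flip: exp_add)
  have z0: "z \<noteq> 0" unfolding z_def by simp
  have cw: "cnj w = inverse w" unfolding w_def by (simp add: exp_cnj exp_minus)
  have cz: "cnj z = inverse z" unfolding z_def by (simp add: exp_cnj exp_minus)
  have cosz: "of_real (cos th) = (z + inverse z)/2" unfolding z_def
    by (simp add: cos_exp_eq exp_minus flip: cos_of_real)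
  have sinz: "of_real (sin th) = (z - inverse z)/(2*\<i>)" unfolding z_def
    by (simp add: sin_exp_eq exp_minus flip: sin_of_real)
  have dl0: "dl \<noteq> 0" using dpos unfolding dl_def by simp
  have e0: "e \<noteq> 0" using dpos hpos unfolding e_def dl_def by simp
  have cdl: "cnj dl = dl" unfolding dl_def by simp
  have ce: "cnj e = - e" unfolding e_def dl_def by simp
  have A0: "A \<noteq> 0" "cnj A = A" using assms(6) unfolding A_def by auto
  have B0: "B \<noteq> 0" "cnj B = B" using assms(7) unfolding B_def by auto
  have l: "of_real d * w + 2 * \<i> / (of_real h * (of_real d * w)) \<noteq> 0 \<and> of_real d * w - 2 * \<i> / (of_real h * (of_real d * w)) \<noteq> 0"
    using assms(5) unfolding w_def by blast
  have b1: "1 - e*z \<noteq> 0"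
  proof
    assume "1 - e*z = 0"
    hence "\<i> * (of_real h * dl * z) = 2" unfolding e_def by (simp add: field_simps)
    hence "(-\<i>) * (\<i> * (of_real h * dl * z)) = -2*\<i>" by simp
    hence "of_real h * dl * z = -2*\<i>" by (simp add: algebra_simps)
    hence "of_real d * w + 2 * \<i> / (of_real h * (of_real d * w)) = 0"
      using dpos hpos w0 unfolding dl_def zw by (auto simp: field_simps)
    with l show False by blast
  qed
  have a1: "1 + e*z \<noteq> 0"
  proof
    assume "1 + e*z = 0"
    hence "2 + \<i> * (of_real h * dl * z) = 0" unfolding e_def by (simp add: field_simps)
    hence "\<i> * (of_real h * dl * z) = -2" by (metis add.commute add_eq_0_iff2)
    hence "(-\<i>) * (\<i> * (of_real h * dl * z)) = 2*\<i>" by simp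
    hence "of_real h * dl * z = 2*\<i>" by (simp add: algebra_simps)
    hence "of_real d * w - 2 * \<i> / (of_real h * (of_real d * w)) = 0"
      using dpos hpos w0 unfolding dl_def zw by (auto simp: field_simps)
    with l show False by blast
  qed
  have b2: "z - e \<noteq> 0"
  proof
    assume "z - e = 0"
    moreover have "cnj (1 + e*z) = (z - e)/z" using z0 by (simp add: ce cz field_simps)
    ultimately have "cnj (1 + e*z) = 0" by simp
    with a1 show False by (metis complex_cnj_zero_iff)
  qed
  have a2: "z + e \<noteq> 0"
  proof
    assume "z + e = 0"
    moreover have "cnj (1 - e*z) = (z + e)/z" using z0 by (simp add: ce cz field_simps)
    ultimately have "cnj (1 - e*z) = 0" by simp
    with b1 show False by (metis complex_cnj_zero_iff)
  qed
  define base where "base = (1 - e*z)/(1 + e*z)"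
  define Ef where "Ef = (\<lambda>k s. mtmE h d th k s)"
  have Edef: "\<And>k s. Ef k s = base powi k * exp (\<i> / 2 * of_real ((d^2 + 1 / d^2) * cos th * s)
          - of_real (1/2 * (d^2 - 1 / d^2) * sin th * s))"
  proof -
    fix k s
    have "(2 - \<i> * of_real h * of_real (d^2) * exp (\<i> * of_real th)) /
      (2 + \<i> * of_real h * of_real (d^2) * exp (\<i> * of_real th)) = base"
    proof -
      have g: "\<And>X::complex. (1 - X/2)/(1 + X/2) = (2 - X)/(2+X)"
      proof -
        fix X :: complex
        have "(1 - X/2)/(1 + X/2) = (2*(1 - X/2))/(2*(1 + X/2))"
          by (rule mult_divide_mult_cancel_left[symmetric]) simp
        moreover have "2*(1 - X/2) = 2 - X" "2*(1 + X/2) = 2 + X" by (simp_all add: algebra_simps)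
        ultimately show "(1 - X/2)/(1 + X/2) = (2 - X)/(2+X)" by simp
      qed
      have ez: "e*z = (\<i> * of_real h * of_real (d^2) * exp (\<i> * of_real th))/2"
        unfolding e_def z_def dl_def by (simp add: power2_eq_square)
      show ?thesis unfolding base_def ez g ..
    qed
    thus "?thesis k s" unfolding Ef_def mtmE_def by simp
  qed
  have base0: "base \<noteq> 0" unfolding base_def using a1 b1 by simp
  have E0: "\<And>k s. Ef k s \<noteq> 0" unfolding Edef using base0 by simp
  have E1: "Ef (n+1) t = base * Ef n t" unfolding Edef using base0 by (simp add: power_int_add)
  have cbase: "cnj base = (z+e)/(z-e)" unfolding base_def using z0 b2 a2
    by (simp add: ce cz field_simps)
  define N where "N = -(2*\<i>*a*cnj b* of_real(sin th)*w)"
  define S where "S = - ((z*z-1)*(z*z-1)) / z"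
  have NcN: "N * cnj N = m * S / z"
  proof -
    have "N * cnj N = 4 * (a*cnj a) * (b * cnj b) * (of_real (sin th) * of_real (sin th)) * (w * cnj w)"
      unfolding N_def by (simp add: algebra_simps)
    also have "\<dots> = 4 * A * B * (of_real (sin th) * of_real (sin th))"
      unfolding A_def B_def complex_norm_square cw using w0 by simp
    also have "\<dots> = m * S / z" unfolding sinz m_def S_def using z0
      by (simp add: field_simps power2_eq_square)
    finally show ?thesis .
  qed
  define Pk where "Pk = (\<lambda>k. B * inverse (Ef k t))"
  define Gk where "Gk = (\<lambda>k. A * cnj (Ef k t))"
  have P0: "\<And>k. Pk k \<noteq> 0" unfolding Pk_def using B0 E0 by simp
  have G0: "\<And>k. Gk k \<noteq> 0" unfolding Gk_def using A0 E0 by simp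
  have cP: "\<And>k. cnj (Pk k) = m / Gk k" unfolding Pk_def Gk_def m_def using A0 B0 E0
    by (simp add: field_simps)
  have cG: "\<And>k. cnj (Gk k) = m / Pk k" unfolding Pk_def Gk_def m_def using A0 B0 E0
    by (simp add: field_simps)
  have m0: "m \<noteq> 0" unfolding m_def using A0 B0 by simp
  have Rden: "\<And>k. mtmR_den h d th a b k t = Pk k + z * Gk k"
    unfolding mtmR_den_def Pk_def Gk_def Ef_def A_def B_def z_def by (simp add: mult.commute)
  have Qden: "\<And>k. mtmQ_den h d th a b k t = of_real d * (z * Pk k + Gk k)"
    unfolding mtmQ_den_def Pk_def Gk_def Ef_def A_def B_def z_def by (simp add: mult.commute mult.left_commute)
  have Rnum: "- (2 * \<i> * of_real d * a * cnj b * of_real (sin th) * exp (\<i> * of_real th / 2)) = of_real d * N"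
    unfolding N_def w_def by (simp add: mult.commute mult.left_commute)
  have Qnum: "- (2 * \<i> * a * cnj b * of_real (sin th) * exp (\<i> * of_real th / 2)) = N"
    unfolding N_def w_def by simp
  have Rk: "\<And>k. mtmR h d th a b k t = of_real d * N / (Pk k + z * Gk k)"
    unfolding mtmR_def Rden Rnum ..
  have Qk: "\<And>k. mtmQ h d th a b k t = N / (of_real d * (z * Pk k + Gk k))"
    unfolding mtmQ_def Qden Qnum ..
  have c1: "2 + \<i> * of_real h * of_real (d^2) * exp (\<i> * of_real th) = 2*(1+e*z)"
    unfolding e_def dl_def z_def by (simp add: algebra_simps power2_eq_square)
  have c2: "2 * exp (\<i> * of_real th) + \<i> * of_real h * of_real (d^2) = 2*(z+e)"
    unfolding e_def dl_def z_def by (simp add: algebra_simps power2_eq_square)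
  have Uden: "mtmU_den h d th a b n t = 2 * (Pk n * (1+e*z) + Gk n * (z+e))"
    unfolding mtmU_den_def c1 c2 Pk_def Gk_def Ef_def A_def B_def
    by algebra
  have Unum: "- (4 * \<i> * of_real d * a * cnj b * of_real (sin th) * exp (\<i> * of_real th / 2))
       = 2 * (of_real d * N)" unfolding N_def w_def by (simp add: algebra_simps)
  have Un: "mtmU h d th a b n t = of_real d * N / (Pk n * (1+e*z) + Gk n * (z+e))"
    unfolding mtmU_def Uden Unum by (rule mult_divide_mult_cancel_left) simp
  have LR: "\<And>k. k = n \<or> k = n+1 \<Longrightarrow> Pk k + z * Gk k \<noteq> 0" using assms(9,10) Rden by auto
  have MQ: "\<And>k. k = n \<or> k = n+1 \<Longrightarrow> z * Pk k + Gk k \<noteq> 0" using assms(11,12) Qden by auto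
  have VU: "Pk n * (1+e*z) + Gk n * (z+e) \<noteq> 0"
  proof
    assume "Pk n * (1+e*z) + Gk n * (z+e) = 0"
    hence "mtmU_den h d th a b n t = 0" unfolding Uden by simp
    with assms(8) show False by simp
  qed
  have cVU: "cnj (Pk n * (1+e*z) + Gk n * (z+e)) = m * (Pk n * (z-e) + Gk n * (1-e*z)) / (Gk n * Pk n * z)"
  proof -
    have "cnj (Pk n * (1+e*z) + Gk n * (z+e)) = m / Gk n * (1 - e * inverse z) + m / Pk n * (inverse z - e)"
      by (simp add: cP cG cz ce)
    also have "\<dots> = m * (Pk n * (z-e) + Gk n * (1-e*z)) / (Gk n * Pk n * z)"
      using P0[of n] G0[of n] z0 by (simp add: field_simps)
    finally show ?thesis .
  qed
  have WU: "Pk n * (z-e) + Gk n * (1-e*z) \<noteq> 0"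
  proof
    assume "Pk n * (z-e) + Gk n * (1-e*z) = 0"
    hence "cnj (Pk n * (1+e*z) + Gk n * (z+e)) = 0" unfolding cVU by simp
    with VU show False by (metis complex_cnj_zero_iff)
  qed
  have cRk: "\<And>k. z * Pk k + Gk k \<noteq> 0 \<Longrightarrow> cnj (mtmR h d th a b k t) = of_real d * cnj N * z * Gk k * Pk k / (m * (z * Pk k + Gk k))"
  proof -
    fix k assume nz: "z * Pk k + Gk k \<noteq> 0"
    have "cnj (mtmR h d th a b k t) = of_real d * cnj N / (m / Gk k + inverse z * (m / Pk k))"
      unfolding Rk by (simp add: cP cG cz)
    also have "\<dots> = of_real d * cnj N * z * Gk k * Pk k / (m * (z * Pk k + Gk k))"
      using P0[of k] G0[of k] z0 m0 nz by (simp add: field_simps)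
    finally show "cnj (mtmR h d th a b k t) = of_real d * cnj N * z * Gk k * Pk k / (m * (z * Pk k + Gk k))" .
  qed
  have cQk: "\<And>k. Pk k + z * Gk k \<noteq> 0 \<Longrightarrow> cnj (mtmQ h d th a b k t) = cnj N * z * Gk k * Pk k / (of_real d * m * (Pk k + z * Gk k))"
  proof -
    fix k assume nz: "Pk k + z * Gk k \<noteq> 0"
    have "cnj (mtmQ h d th a b k t) = cnj N / (of_real d * (inverse z * (m / Gk k) + m / Pk k))"
      unfolding Qk by (simp add: cP cG cz)
    also have "\<dots> = cnj N * z * Gk k * Pk k / (of_real d * m * (Pk k + z * Gk k))"
      using P0[of k] G0[of k] z0 m0 nz dpos by (simp add: field_simps)
    finally show "cnj (mtmQ h d th a b k t) = cnj N * z * Gk k * Pk k / (of_real d * m * (Pk k + z * Gk k))" .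
  qed
  have cUn: "cnj (mtmU h d th a b n t) = of_real d * cnj N * z * Gk n * Pk n / (m * (Pk n * (z-e) + Gk n * (1-e*z)))"
  proof -
    have "cnj (mtmU h d th a b n t) = of_real d * cnj N / cnj (Pk n * (1+e*z) + Gk n * (z+e))"
      unfolding Un by simp
    also have "\<dots> = of_real d * cnj N * z * Gk n * Pk n / (m * (Pk n * (z-e) + Gk n * (1-e*z)))"
      unfolding cVU using P0[of n] G0[of n] z0 m0 WU by (simp add: field_simps)
    finally show ?thesis .
  qed
  have P1: "Pk (n+1) = Pk n * (1+e*z)/(1-e*z)" unfolding Pk_def E1 base_def using a1 b1 E0
    by (simp add: field_simps)
  have G1: "Gk (n+1) = Gk n * (z+e)/(z-e)" unfolding Gk_def E1 complex_cnj_mult cbase using a2 b2 E0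
    by (simp add: field_simps)
  define P where "P = Pk n"
  define G where "G = Gk n"
  define V where "V = P*(1+e*z) + G*(z+e)"
  define W where "W = P*(z-e) + G*(1-e*z)"
  define L where "L = P + z*G"
  define M where "M = z*P + G"
  define L1 where "L1 = P*(1+e*z)*(z-e) + z*G*(z+e)*(1-e*z)"
  define M1 where "M1 = z*P*(1+e*z)*(z-e) + G*(z+e)*(1-e*z)"
  define dd :: complex where "dd = of_real d"
  have dd0: "dd \<noteq> 0" using dpos unfolding dd_def by simp
  have dldd: "dl = dd*dd" unfolding dl_def dd_def ..
  have V0: "V \<noteq> 0" using VU unfolding V_def P_def G_def .
  have W0: "W \<noteq> 0" using WU unfolding W_def P_def G_def .
  have L0: "L \<noteq> 0" using LR[of n] unfolding L_def P_def G_def by simp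
  have M0: "M \<noteq> 0" using MQ[of n] unfolding M_def P_def G_def by simp
  have LL1: "Pk (n+1) + z * Gk (n+1) = L1 / ((1-e*z)*(z-e))"
    unfolding P1 G1 L1_def P_def G_def using b1 b2 by (simp add: field_simps)
  have MM1: "z * Pk (n+1) + Gk (n+1) = M1 / ((1-e*z)*(z-e))"
    unfolding P1 G1 M1_def P_def G_def using b1 b2 by (simp add: field_simps)
  have L10: "L1 \<noteq> 0" using LR[of "n+1"] unfolding LL1 by auto
  have M10: "M1 \<noteq> 0" using MQ[of "n+1"] unfolding MM1 by auto
  define K1 where "K1 = (1-e*z)*(z-e)/L1"
  define K0 where "K0 = 1/L"
  define J1 where "J1 = (1-e*z)*(z-e)/M1"
  define J0 where "J0 = 1/M"
  define Y where "Y = 1/V"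
  define T where "T = S*G*P/(V*W)"
  have R1e: "mtmR h d th a b (n+1) t = dd * N * K1"
    unfolding Rk LL1 K1_def dd_def using b1 b2 L10 by (simp add: field_simps)
  have R0e: "mtmR h d th a b n t = dd * N * K0"
    unfolding Rk K0_def dd_def L_def P_def G_def by simp
  have Q1e: "mtmQ h d th a b (n+1) t = N * J1 / dd"
    unfolding Qk MM1 J1_def dd_def using b1 b2 M10 dpos by (simp add: field_simps)
  have Q0e: "mtmQ h d th a b n t = N * J0 / dd"
    unfolding Qk J0_def dd_def M_def P_def G_def by simp
  have U0e: "mtmU h d th a b n t = dd * N * Y"
    unfolding Un Y_def dd_def V_def P_def G_def by simp
  have Uabs: "of_real ((cmod (mtmU h d th a b n t))^2) = dl * T"
  proof -
    have "of_real ((cmod (mtmU h d th a b n t))^2) = mtmU h d th a b n t * cnj (mtmU h d th a b n t)"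
      by (rule complex_norm_square)
    also have "\<dots> = dd*dd * (N * cnj N) * z * G * P / (m * V * W)"
      unfolding cUn unfolding Un P_def[symmetric] G_def[symmetric] V_def[symmetric] W_def[symmetric] dd_def
      by (simp add: field_simps)
    also have "\<dots> = dl * T" unfolding NcN T_def dldd using z0 m0 by (simp add: field_simps)
    finally show ?thesis .
  qed
  have ih: "\<i> * of_real h / 2 = e / dl" unfolding e_def using dl0 by (simp add: field_simps)
  have ih2: "- 2 * \<i> / of_real h = dl / e" unfolding e_def using dl0 hpos by (simp add: field_simps)
  have g3: "K1 + K0 - 2*Y + e*T*(K1-K0) = 0"
    using gen3[where P=P and G=G and z=z and e=e] V0 W0 L0 L10 z0
    unfolding K1_def K0_def Y_def T_def S_def V_def W_def L_def L1_def by (simp add: mult.assoc)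
  have g2: "(1/e)*(J1 - J0) + 2*Y - T*(J1 + J0) = 0"
    using gen2[where P=P and G=G and z=z and e=e] V0 W0 M0 M10 z0 e0
    unfolding J1_def J0_def Y_def T_def S_def V_def W_def M_def M1_def by (simp add: mult.assoc)
  have eq3: "mtmR h d th a b (n+1) t + mtmR h d th a b n t - 2 * mtmU h d th a b n t
        + \<i> * of_real h / 2 * of_real ((cmod (mtmU h d th a b n t))^2) * (mtmR h d th a b (n+1) t - mtmR h d th a b n t) = 0"
  proof -
    have "mtmR h d th a b (n+1) t + mtmR h d th a b n t - 2 * mtmU h d th a b n t
        + \<i> * of_real h / 2 * of_real ((cmod (mtmU h d th a b n t))^2) * (mtmR h d th a b (n+1) t - mtmR h d th a b n t)
        = dd * N * (K1 + K0 - 2*Y + e*T*(K1-K0))"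
      unfolding Uabs unfolding R1e R0e U0e ih using dl0 by (simp add: field_simps)
    thus ?thesis unfolding g3 by simp
  qed
  have eq2: "- 2 * \<i> / of_real h * (mtmQ h d th a b (n+1) t - mtmQ h d th a b n t) + 2 * mtmU h d th a b n t
        - of_real ((cmod (mtmU h d th a b n t))^2) * (mtmQ h d th a b (n+1) t + mtmQ h d th a b n t) = 0"
  proof -
    have "- 2 * \<i> / of_real h * (mtmQ h d th a b (n+1) t - mtmQ h d th a b n t) + 2 * mtmU h d th a b n t
        - of_real ((cmod (mtmU h d th a b n t))^2) * (mtmQ h d th a b (n+1) t + mtmQ h d th a b n t)
        = dd * N * ((1/e)*(J1 - J0) + 2*Y - T*(J1 + J0))"
      unfolding Uabs unfolding Q1e Q0e U0e ih2 dldd using dd0 e0 by (simp add: field_simps)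
    thus ?thesis unfolding g2 by simp
  qed
  have sin0: "sin th > 0" using assms(3,4) by (rule sin_gt_zero)
  have N0: "N \<noteq> 0" unfolding N_def using assms(6,7) w0 sin0 by simp
  have cNe: "cnj N = m * S / (z * N)" using NcN N0 z0 by (simp add: field_simps)
  define kk where "kk = \<i>/2 * of_real ((d^2 + 1/d^2) * cos th) - of_real (1/2 * (d^2 - 1/d^2) * sin th)"
  define ck where "ck = cnj kk"
  define C where "C = base powi n"
  have Es: "\<And>s. Ef n s = C * exp (of_real s * kk)"
    unfolding Edef C_def kk_def by (simp add: algebra_simps)
  have EIs: "\<And>s. inverse (Ef n s) = inverse C * exp (of_real s * (-kk))"
    unfolding Es by (simp add: exp_minus)
  have ECs: "\<And>s. cnj (Ef n s) = cnj C * exp (of_real s * ck)"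
    unfolding Es ck_def by (simp add: exp_cnj)
  have EfE: "\<And>k s. mtmE h d th k s = Ef k s" unfolding Ef_def ..
  define den where "den = (\<lambda>x. B*(2*(1+e*z)) * (inverse C * exp (x*(-kk))) + A*(2*(z+e)) * (cnj C * exp (x*ck)))"
  define f where "f = (\<lambda>x. 2*(dd*N) * inverse (den x))"
  have Uden_s: "\<And>s. mtmU_den h d th a b n s = den (of_real s)"
    unfolding mtmU_den_def c1 c2 EfE EIs ECs den_def A_def B_def ..
  have mtmU_s: "\<And>s. mtmU h d th a b n s = f (of_real s)"
    unfolding mtmU_def Unum Uden_s f_def dd_def by (simp add: divide_inverse)
  define x0 :: complex where "x0 = of_real t"
  have dexp: "\<And>c. ((\<lambda>x. exp (x*c)) has_field_derivative exp (x0*c) * c) (at x0)"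
    by (auto intro!: derivative_eq_intros)
  define den' where "den' = B*(2*(1+e*z))*(inverse C*(exp(x0*(-kk))*(-kk))) + A*(2*(z+e))*(cnj C*(exp(x0*ck)*ck))"
  have dden: "(den has_field_derivative den') (at x0)"
    unfolding den_def den'_def by (intro DERIV_add DERIV_cmult dexp)
  have den0: "den x0 \<noteq> 0" using assms(8) unfolding x0_def Uden_s by simp
  have df: "(f has_field_derivative 2*(dd*N) * (-(den' * inverse (den x0 ^ Suc (Suc 0))))) (at x0)"
    unfolding f_def by (intro DERIV_cmult DERIV_inverse_fun dden den0)
  define Dv where "Dv = 2*(dd*N) * (-(den' * inverse (den x0 ^ Suc (Suc 0))))"
  have dU: "((\<lambda>s. mtmU h d th a b n s) has_vector_derivative Dv) (at t)"
    unfolding mtmU_s Dv_def using has_vector_derivative_real_field[OF df[unfolded x0_def]] x0_def by simp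
  define Vdot where "Vdot = P*(1+e*z)*(-kk) + G*(z+e)*ck"
  have denV: "den x0 = 2*V" using Uden_s[of t] Uden unfolding x0_def V_def P_def G_def by simp
  have den'V: "den' = 2*Vdot"
  proof -
    have i1: "inverse C*(exp(x0*(-kk))*(-kk)) = inverse (Ef n t) * (-kk)"
      unfolding EIs x0_def by (simp add: mult.assoc)
    have i2: "cnj C*(exp(x0*ck)*ck) = cnj (Ef n t) * ck"
      unfolding ECs x0_def by (simp add: mult.assoc)
    show ?thesis unfolding den'_def i1 i2 Vdot_def P_def G_def Pk_def Gk_def by algebra
  qed
  have Dv2: "Dv = - (dd*N*Vdot/(V*V))"
    unfolding Dv_def denV den'V using V0 by (simp add: field_simps)
  have sinz': "of_real (sin th) = - \<i> * (z - inverse z) / 2"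
    unfolding sinz divide_divide_eq_left[symmetric] divide_i by simp
  have kkz: "kk = \<i>/2 * (dl*z + 1/(dl*z))"
    unfolding kk_def of_real_diff of_real_mult of_real_add of_real_divide of_real_power cosz sinz' dl_def
    using z0 dpos by (simp add: field_simps power2_eq_square)
  have ckz: "ck = - \<i>/2 * (dl/z + z/dl)"
    unfolding ck_def kkz using z0 dl0 by (simp add: cz cdl field_simps)
  define Vd where "Vd = -2*(dl*z + 1/(dl*z))*P*(1+e*z) - 2*(dl/z+z/dl)*G*(z+e)"
  define Z where "Z = Vd/(V*V)"
  define F1 where "F1 = G*P/M"
  define F2 where "F2 = G*P*(1+e*z)*(z+e)/M1"
  define H1 where "H1 = K0*F1"
  define H2 where "H2 = K1*F2"
  define I1 where "I1 = G*P*(1+e*z)*(z+e)/L1"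
  define I0 where "I0 = G*P/L"
  have VdV: "Vd = - 4*\<i>*Vdot" unfolding Vd_def Vdot_def kkz ckz using z0 dl0 by (simp add: algebra_simps, simp add: field_simps)
  have D4: "4*\<i>*Dv = dd*N*Z" unfolding Dv2 Z_def VdV using V0 by (simp add: field_simps)
  have g1: "dl*Z + J1 + J0 - (dl*dl/e)*(K1 - K0) + dl*dl*S*(Y*Y)*(F1+F2) - S*(1+dl*dl)*Y*(H1+H2) - e*S*(Y*Y)*(I1 - I0) = 0"
    using gen1a[where P=P and G=G and z=z and e=e and dl=dl and Z=Z and Y=Y and Ja=J1 and Jb=J0 and Ka=K1 and Kb=K0
       and Fa=F1 and Fb=F2 and Ha=H1 and Hb=H2 and Ia=I1 and Ib=I0] V0 L0 M0 L10 M10 b1 b2 e0 dl0 z0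
    unfolding Z_def Vd_def Y_def J1_def J0_def K1_def K0_def F1_def F2_def H1_def H2_def I1_def I0_def S_def
      V_def L_def M_def L1_def M1_def by simp
  have MQn: "z * Pk n + Gk n \<noteq> 0" using MQ[of n] by simp
  have MQn1: "z * Pk (n+1) + Gk (n+1) \<noteq> 0" using MQ[of "n+1"] by simp
  have LRn: "Pk n + z * Gk n \<noteq> 0" using LR[of n] by simp
  have LRn1: "Pk (n+1) + z * Gk (n+1) \<noteq> 0" using LR[of "n+1"] by simp
  have cR0: "cnj (mtmR h d th a b n t) = dd*S*F1/N"
    unfolding cRk[OF MQn] cNe F1_def dd_def[symmetric] P_def[symmetric] G_def[symmetric] M_def[symmetric]
    using z0 m0 N0 M0 by (simp add: field_simps)
  have cR1: "cnj (mtmR h d th a b (n+1) t) = dd*S*F2/N"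
    unfolding cRk[OF MQn1] cNe F2_def dd_def[symmetric] MM1 unfolding P1 G1 P_def[symmetric] G_def[symmetric]
    by (rule fracR1[OF M10 b1 b2 N0 m0 z0])
  have cQ0: "cnj (mtmQ h d th a b n t) = S*I0/(dd*N)"
    unfolding cQk[OF LRn] cNe I0_def dd_def[symmetric] P_def[symmetric] G_def[symmetric] L_def[symmetric]
    using z0 m0 N0 dd0 L0 by (simp add: field_simps)
  have cQ1: "cnj (mtmQ h d th a b (n+1) t) = S*I1/(dd*N)"
    unfolding cQk[OF LRn1] cNe I1_def dd_def[symmetric] LL1 unfolding P1 G1 P_def[symmetric] G_def[symmetric]
    by (rule fracQ1[OF L10 b1 b2 N0 m0 z0 dd0])
  have JI0: "J0*I0 = H1" unfolding J0_def I0_def H1_def K0_def F1_def using L0 M0 by (simp add: field_simps)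
  have JI1: "J1*I1 = H2" unfolding J1_def I1_def H2_def K1_def F2_def using L10 M10 by (simp add: field_simps)
  have nsum: "of_real ((cmod (mtmQ h d th a b (n+1) t))^2 + (cmod (mtmQ h d th a b n t))^2
        + (cmod (mtmR h d th a b (n+1) t))^2 + (cmod (mtmR h d th a b n t))^2)
        = S*H2/dl + S*H1/dl + dl*S*H2 + dl*S*H1"
  proof -
    have "of_real ((cmod (mtmQ h d th a b (n+1) t))^2 + (cmod (mtmQ h d th a b n t))^2
        + (cmod (mtmR h d th a b (n+1) t))^2 + (cmod (mtmR h d th a b n t))^2)
        = mtmQ h d th a b (n+1) t * cnj (mtmQ h d th a b (n+1) t) + mtmQ h d th a b n t * cnj (mtmQ h d th a b n t)
          + mtmR h d th a b (n+1) t * cnj (mtmR h d th a b (n+1) t) + mtmR h d th a b n t * cnj (mtmR h d th a b n t)"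
      by (simp only: of_real_add complex_norm_square)
    also have "\<dots> = (N*J1/dd)*(S*I1/(dd*N)) + (N*J0/dd)*(S*I0/(dd*N)) + (dd*N*K1)*(dd*S*F2/N) + (dd*N*K0)*(dd*S*F1/N)"
      unfolding cR0 cR1 cQ0 cQ1 unfolding Q1e Q0e R1e R0e ..
    also have "\<dots> = S*(J1*I1)/dl + S*(J0*I0)/dl + dl*S*(K1*F2) + dl*S*(K0*F1)"
      unfolding dldd using N0 dd0 by (simp add: field_simps)
    finally show ?thesis unfolding JI0 JI1 H1_def[symmetric] H2_def[symmetric] .
  qed
  have ih3: "2 * \<i> / of_real h = - dl / e" unfolding e_def using dl0 hpos by (simp add: field_simps)
  define x where "x = N/dd"
  have T1: "4 * \<i> * Dv = x*(dl*Z)" unfolding D4 x_def dldd using dd0 by (simp add: field_simps)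
  have T2: "mtmQ h d th a b (n+1) t = x*J1" unfolding Q1e x_def by simp
  have T3: "mtmQ h d th a b n t = x*J0" unfolding Q0e x_def by simp
  have T4: "2 * \<i> / of_real h * (mtmR h d th a b (n+1) t - mtmR h d th a b n t) = - (x*((dl*dl/e)*(K1 - K0)))"
    unfolding ih3 R1e R0e x_def dldd using dd0 e0 by (simp add: field_simps)
  have T5: "(mtmU h d th a b n t)^2 * (cnj (mtmR h d th a b n t) + cnj (mtmR h d th a b (n+1) t)) = x*(dl*dl*S*(Y*Y)*(F1+F2))"
    unfolding cR0 cR1 unfolding U0e x_def dldd using dd0 N0 by (simp add: field_simps power2_eq_square)
  have T6: "mtmU h d th a b n t * of_real ((cmod (mtmQ h d th a b (n+1) t))^2 + (cmod (mtmQ h d th a b n t))^2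
            + (cmod (mtmR h d th a b (n+1) t))^2 + (cmod (mtmR h d th a b n t))^2) = x*(S*(1+dl*dl)*Y*(H1+H2))"
    unfolding nsum unfolding U0e x_def dldd using dd0 N0 by (simp add: field_simps)
  have T7: "\<i> * of_real h / 2 * (mtmU h d th a b n t)^2 * (cnj (mtmQ h d th a b (n+1) t) - cnj (mtmQ h d th a b n t)) = x*(e*S*(Y*Y)*(I1 - I0))"
    unfolding cQ0 cQ1 unfolding ih U0e x_def dldd using dd0 N0 by (simp add: field_simps power2_eq_square)
  have lin1: "\<And>x a b c d f g k :: complex. x*(a + b + c - d + f - g - k) = x*a + x*b + x*c + - (x*d) + x*f - x*g - x*k"
    by (simp add: algebra_simps)
  have eq1: "4 * \<i> * Dv + mtmQ h d th a b (n+1) t + mtmQ h d th a b n t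
        + 2 * \<i> / of_real h * (mtmR h d th a b (n+1) t - mtmR h d th a b n t)
        + (mtmU h d th a b n t)^2 * (cnj (mtmR h d th a b n t) + cnj (mtmR h d th a b (n+1) t))
        - mtmU h d th a b n t * of_real ((cmod (mtmQ h d th a b (n+1) t))^2 + (cmod (mtmQ h d th a b n t))^2
            + (cmod (mtmR h d th a b (n+1) t))^2 + (cmod (mtmR h d th a b n t))^2)
        - \<i> * of_real h / 2 * (mtmU h d th a b n t)^2 * (cnj (mtmQ h d th a b (n+1) t) - cnj (mtmQ h d th a b n t)) = 0"
    unfolding T7 unfolding T6 unfolding T5 unfolding T4 unfolding T1 T2 T3 lin1[symmetric] g1 by simp
  show ?thesis unfolding semidiscrete_MTM_at_def using dU eq1 eq2 eq3 by blast
qed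
end
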